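(* Let $\mathcal{I}$ be an interval hypergraph on $[n]$ closed under intersection, and let $A,B$ be acyclic orientations of $\mathcal{I}$. The following are equivalent: (a) $A\le B$ in $P_{\mathcal{I}}$; (b) $A(I)\le B(I)$ for all $I\in\mathcal{I}$; (c) $\sigma_A\le\tau_B$ in the weak order; (d) for all $i<j$ in $[n]$, $j\prec_A i$ implies $i\not\prec_B j$.
   Context: An interval hypergraph $\mathcal{I}$ on $[n]$ is a collection of intervals of $[n]$ containing all singletons; it is closed under intersection if $I,J\in\mathcal{I}$, $I\cap J\ne\varnothing$ imply $I\cap J\in\mathcal{I}$. An orientation is a map $O:\mathcal{I}\to[n]$ with $O(I)\in I$; it is acyclic if there are no $H_1,\dots,H_k$, $k\ge2$, with $O(H_{i+1})\in H_i\setminus\{O(H_i)\}$ for $i\in[k-1]$ and $O(H_1)\in H_k\setminus\{O(H_k)\}$. Orientations $O\ne O'$ are related by an increasing flip (from $O$ to $O'$) if there exist $1\le i<j\le n$ such that for all $H$: if $O(H)\ne O'(H)$ then $O(H)=i$, $O'(H)=j$; and if $\{i,j\}\subseteq H$ then $O(H)=i\iff O'(H)=j$. $P_{\mathcal{I}}$ is the transitive closure of the increasing flip relation on acyclic orientations. For a permutation $\pi$, $\mathrm{Or}_\pi(I)=\pi(\min\{j:\pi(j)\in I\})$; for each acyclic orientation $A$ the fiber $\{\pi:\mathrm{Or}_\pi=A\}$ is an interval of the weak order, denoted $[\sigma_A,\tau_A]$. The partial order $\prec_A$ on $[n]$ is the transitive closure of $A(I)\prec_A h$ for $I\in\mathcal{I}$,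 $h\in I\setminus\{A(I)\}$. *)

theory Defs
  imports Main "HOL-Combinatorics.Permutations"
begin

definition interval_hypergraph :: "nat \<Rightarrow> nat set set \<Rightarrow> bool" where
  "interval_hypergraph n \<I> \<longleftrightarrow>
     (\<forall>I\<in>\<I>. \<exists>a b. 1 \<le> a \<and> a \<le> b \<and> b \<le> n \<and> I = {a..b}) \<and>
     (\<forall>i\<in>{1..n}. {i} \<in> \<I>)"

definition closed_under_intersection :: "nat set set \<Rightarrow> bool" where
  "closed_under_intersection \<I> \<longleftrightarrow>
     (\<forall>I\<in>\<I>. \<forall>J\<in>\<I>. I \<inter> J \<noteq> {} \<longrightarrow> I \<inter> J \<in> \<I>)"

text \<open>An orientation is a map on the hyperedges; outside the hypergraph it is
  normalised to the constant undefined, so orientations are genuine functions on the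
  hypergraph and equality of orientations is equality of these maps.\<close>

definition orientation :: "nat set set \<Rightarrow> (nat set \<Rightarrow> nat) \<Rightarrow> bool" where
  "orientation \<I> Ori \<longleftrightarrow> (\<forall>I\<in>\<I>. Ori I \<in> I) \<and> (\<forall>I. I \<notin> \<I> \<longrightarrow> Ori I = undefined)"

text \<open>Cycles H_1,...,H_k are indexed 0..k-1 here.\<close>

definition acyclic_orientation :: "nat set set \<Rightarrow> (nat set \<Rightarrow> nat) \<Rightarrow> bool" where
  "acyclic_orientation \<I> Ori \<longleftrightarrow> orientation \<I> Ori \<and>
     \<not> (\<exists>k (H :: nat \<Rightarrow> nat set). k \<ge> 2 \<and> (\<forall>i<k. H i \<in> \<I>) \<and>
           (\<forall>i<k. Ori (H ((i + 1) mod k)) \<in> H i - {Ori (H i)}))"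

definition increasing_flip :: "nat \<Rightarrow> nat set set \<Rightarrow> (nat set \<Rightarrow> nat) \<Rightarrow> (nat set \<Rightarrow> nat) \<Rightarrow> bool" where
  "increasing_flip n \<I> Ori Ori' \<longleftrightarrow> Ori \<noteq> Ori' \<and>
     (\<exists>i j. 1 \<le> i \<and> i < j \<and> j \<le> n \<and>
        (\<forall>H\<in>\<I>. (Ori H \<noteq> Ori' H \<longrightarrow> Ori H = i \<and> Ori' H = j) \<and>
                 ({i, j} \<subseteq> H \<longrightarrow> (Ori H = i \<longleftrightarrow> Ori' H = j))))"

definition P_le :: "nat \<Rightarrow> nat set set \<Rightarrow> (nat set \<Rightarrow> nat) \<Rightarrow> (nat set \<Rightarrow> nat) \<Rightarrow> bool" where
  "P_le n \<I> A B \<longleftrightarrow>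
     (A, B) \<in> {(Ori, Ori'). acyclic_orientation \<I> Ori \<and> acyclic_orientation \<I> Ori' \<and>
                        increasing_flip n \<I> Ori Ori'}\<^sup>*"

text \<open>Permutations of [n] are maps permuting {1..n}; pi(j) is the j-th letter of the word.\<close>

definition Or_perm :: "(nat \<Rightarrow> nat) \<Rightarrow> nat set \<Rightarrow> nat" where
  "Or_perm \<pi> I = \<pi> (LEAST j. j \<ge> 1 \<and> \<pi> j \<in> I)"

text \<open>(Right) weak order: inclusion of inversion sets, inversions being pairs of values
  a < b such that b occurs before a in the word of pi.\<close>

definition inversions :: "(nat \<Rightarrow> nat) \<Rightarrow> (nat \<times> nat) set" where
  "inversions \<pi> = {(a, b). a < b \<and> inv \<pi> b < inv \<pi> a}"

definition weak_le :: "nat \<Rightarrow> (nat \<Rightarrow> nat) \<Rightarrow> (nat \<Rightarrow> nat) \<Rightarrow> bool" where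
  "weak_le n \<pi> \<rho> \<longleftrightarrow> \<pi> permutes {1..n} \<and> \<rho> permutes {1..n} \<and> inversions \<pi> \<subseteq> inversions \<rho>"

definition fiber :: "nat \<Rightarrow> nat set set \<Rightarrow> (nat set \<Rightarrow> nat) \<Rightarrow> (nat \<Rightarrow> nat) set" where
  "fiber n \<I> A = {\<pi>. \<pi> permutes {1..n} \<and> (\<forall>I\<in>\<I>. Or_perm \<pi> I = A I)}"

definition sigma_of :: "nat \<Rightarrow> nat set set \<Rightarrow> (nat set \<Rightarrow> nat) \<Rightarrow> (nat \<Rightarrow> nat)" where
  "sigma_of n \<I> A = (THE \<pi>. \<pi> \<in> fiber n \<I> A \<and> (\<forall>\<rho>\<in>fiber n \<I> A. weak_le n \<pi> \<rho>))"

definition tau_of :: "nat \<Rightarrow> nat set set \<Rightarrow> (nat set \<Rightarrow> nat) \<Rightarrow> (nat \<Rightarrow> nat)" where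
  "tau_of n \<I> A = (THE \<pi>. \<pi> \<in> fiber n \<I> A \<and> (\<forall>\<rho>\<in>fiber n \<I> A. weak_le n \<rho> \<pi>))"

definition prec :: "nat set set \<Rightarrow> (nat set \<Rightarrow> nat) \<Rightarrow> (nat \<times> nat) set" where
  "prec \<I> A = {(A I, h) | I h. I \<in> \<I> \<and> h \<in> I - {A I}}\<^sup>+"

end

theory Submission
  imports Defs
begin

definition pos_inv :: "(nat \<Rightarrow> nat) \<Rightarrow> (nat \<times> nat) set" where
  "pos_inv p = {(a, b). a < b \<and> p b < p a}"

lemma inversions_inv:
  assumes "g permutes S" shows "inversions (inv g) = pos_inv g"
  unfolding inversions_def pos_inv_def permutes_inv_inv[OF assms] by (rule refl)

lemma perm_range:
  assumes "g permutes {1..(n::nat)}" "x \<in> {1..n}" shows "g x \<in> {1..n}"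
  using permutes_in_image[OF assms(1)] assms(2) by simp

lemma pos_inv_sub:
  assumes "g permutes {1..(n::nat)}" "(a, b) \<in> pos_inv g"
  shows "a \<in> {1..n} \<and> b \<in> {1..n}"
proof -
  have ab: "a < b" "g b < g a" using assms(2) unfolding pos_inv_def by auto
  have out: "\<And>x. x \<notin> {1..n} \<Longrightarrow> g x = x" by (rule permutes_not_in[OF assms(1)])
  have rng: "\<And>x. x \<in> {1..n} \<Longrightarrow> g x \<in> {1..n}" by (rule perm_range[OF assms(1)])
  show ?thesis
  proof (cases "a \<in> {1..n}")
    case True
    then show ?thesis
    proof (cases "b \<in> {1..n}")
      case False
      then have "b > n" using ab True by auto
      then show ?thesis using ab out[OF False] rng[OF True] by auto
    qed auto
  next
    case False
    then have "a = 0 \<or> a > n" by auto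
    then show ?thesis
    proof
      assume "a = 0" then show ?thesis using ab out[OF False] by auto
    next
      assume a: "a > n"
      then have "b \<notin> {1..n}" using ab by auto
      then show ?thesis using ab out[OF False] out[of b] by auto
    qed
  qed
qed

lemma rank_card:
  assumes "bij_betw f {1..(n::nat)} {1..n}" "x \<in> {1..n}"
  shows "card {y \<in> {1..n}. f y < f x} = f x - 1"
proof -
  have inj: "inj_on f {y \<in> {1..n}. f y < f x}"
    using assms(1) unfolding bij_betw_def by (auto intro: inj_on_subset)
  have fx: "f x \<in> {1..n}" using bij_betwE[OF assms(1)] assms(2) by simp
  have "f ` {y \<in> {1..n}. f y < f x} = {k \<in> {1..n}. k < f x}"
  proof
    show "f ` {y \<in> {1..n}. f y < f x} \<subseteq> {k \<in> {1..n}. k < f x}"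
      using assms(1) bij_betwE by fastforce
  next
    show "{k \<in> {1..n}. k < f x} \<subseteq> f ` {y \<in> {1..n}. f y < f x}"
    proof
      fix k assume k: "k \<in> {k \<in> {1..n}. k < f x}"
      then obtain y where "y \<in> {1..n}" "f y = k"
        using assms(1) unfolding bij_betw_def by (metis (no_types, lifting) imageE mem_Collect_eq)
      then show "k \<in> f ` {y \<in> {1..n}. f y < f x}" using k by auto
    qed
  qed
  moreover have "{k \<in> {1..n}. k < f x} = {1..<f x}" using fx by auto
  ultimately have "card (f ` {y \<in> {1..n}. f y < f x}) = f x - 1" by simp
  then show ?thesis using card_image[OF inj] by simp
qed

lemma perm_eq_from_order:
  assumes "g permutes {1..(n::nat)}" "g' permutes {1..n}"
    and "\<And>x y. x \<in> {1..n} \<Longrightarrow> y \<in> {1..n} \<Longrightarrow> g x < g y \<longleftrightarrow> g' x < g' y"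
  shows "g = g'"
proof
  fix x
  show "g x = g' x"
  proof (cases "x \<in> {1..n}")
    case True
    have b1: "bij_betw g {1..n} {1..n}" by (rule permutes_imp_bij[OF assms(1)])
    have b2: "bij_betw g' {1..n} {1..n}" by (rule permutes_imp_bij[OF assms(2)])
    have "{y \<in> {1..n}. g y < g x} = {y \<in> {1..n}. g' y < g' x}" using assms(3) True by auto
    then have "g x - 1 = g' x - 1" using rank_card[OF b1 True] rank_card[OF b2 True] by simp
    moreover have "g x \<ge> 1" "g' x \<ge> 1" using perm_range[OF assms(1) True] perm_range[OF assms(2) True] by auto
    ultimately show ?thesis by simp
  next
    case False
    then show ?thesis using permutes_not_in[OF assms(1) False] permutes_not_in[OF assms(2) False] by simp
  qed
qed

lemma perm_eq_from_pos_inv: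
  assumes "g permutes {1..(n::nat)}" "g' permutes {1..n}" "pos_inv g = pos_inv g'"
  shows "g = g'"
proof (rule perm_eq_from_order[OF assms(1,2)])
  fix x y assume x: "x \<in> {1..n}" and y: "y \<in> {1..n}"
  have ig: "inj g" "inj g'" using permutes_inj[OF assms(1)] permutes_inj[OF assms(2)] by auto
  consider "x < y" | "x = y" | "y < x" by linarith
  then show "g x < g y \<longleftrightarrow> g' x < g' y"
  proof cases
    case 1
    have "(x, y) \<in> pos_inv g \<longleftrightarrow> (x, y) \<in> pos_inv g'" using assms(3) by simp
    then have "g y < g x \<longleftrightarrow> g' y < g' x" using 1 unfolding pos_inv_def by simp
    moreover have "g x \<noteq> g y" "g' x \<noteq> g' y" using 1 ig by (auto dest: injD)
    ultimately show ?thesis by linarith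
  next
    case 3
    have "(y, x) \<in> pos_inv g \<longleftrightarrow> (y, x) \<in> pos_inv g'" using assms(3) by simp
    then show ?thesis using 3 unfolding pos_inv_def by simp
  qed simp
qed

lemma perm_of_order:
  fixes lt :: "nat \<Rightarrow> nat \<Rightarrow> bool"
  assumes irr: "\<And>x. \<not> lt x x"
    and tr: "\<And>x y z. x \<in> {1..n} \<Longrightarrow> y \<in> {1..n} \<Longrightarrow> z \<in> {1..n} \<Longrightarrow> lt x y \<Longrightarrow> lt y z \<Longrightarrow> lt x z"
    and tot: "\<And>x y. x \<in> {1..n} \<Longrightarrow> y \<in> {1..n} \<Longrightarrow> x \<noteq> y \<Longrightarrow> lt x y \<or> lt y x"
  shows "\<exists>g. g permutes {1..n} \<and> (\<forall>x\<in>{1..n}. \<forall>y\<in>{1..n}. g x < g y \<longleftrightarrow> lt x y)"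
proof -
  define g where "g x = (if x \<in> {1..n} then Suc (card {y \<in> {1..n}. lt y x}) else x)" for x
  have mono: "g x < g y" if "x \<in> {1..n}" "y \<in> {1..n}" "lt x y" for x y
  proof -
    have s1: "{z \<in> {1..n}. lt z x} \<subseteq> {z \<in> {1..n}. lt z y}"
    proof
      fix z assume "z \<in> {z \<in> {1..n}. lt z x}"
      then show "z \<in> {z \<in> {1..n}. lt z y}" using tr[of z x y] that by simp
    qed
    have "x \<in> {z \<in> {1..n}. lt z y}" "x \<notin> {z \<in> {1..n}. lt z x}" using that irr by auto
    then have "{z \<in> {1..n}. lt z x} \<subset> {z \<in> {1..n}. lt z y}" using s1 by blast
    then have "card {z \<in> {1..n}. lt z x} < card {z \<in> {1..n}. lt z y}"
      by (simp add: psubset_card_mono)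
    then show ?thesis using that unfolding g_def by simp
  qed
  have ord: "g x < g y \<longleftrightarrow> lt x y" if "x \<in> {1..n}" "y \<in> {1..n}" for x y
  proof (cases "x = y")
    case True then show ?thesis using irr by simp
  next
    case False
    then have "lt x y \<or> lt y x" using tot that by blast
    then show ?thesis using mono[OF that] mono[OF that(2,1)] irr by auto
  qed
  have inj: "inj_on g {1..n}"
  proof (rule inj_onI)
    fix x y assume "x \<in> {1..n}" "y \<in> {1..n}" "g x = g y"
    note xy = this
    show "x = y"
    proof (rule ccontr)
      assume "x \<noteq> y"
      then have "lt x y \<or> lt y x" using tot xy(1,2) by blast
      then show False using mono[OF xy(1,2)] mono[OF xy(2,1)] xy(3) by auto
    qed
  qed
  have into: "g ` {1..n} \<subseteq> {1..n}"
  proof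
    fix k assume "k \<in> g ` {1..n}"
    then obtain x where x: "x \<in> {1..n}" "k = g x" by auto
    have "{y \<in> {1..n}. lt y x} \<subseteq> {1..n} - {x}" using irr by auto
    then have "card {y \<in> {1..n}. lt y x} \<le> card ({1..n} - {x})" by (intro card_mono) auto
    also have "\<dots> = n - 1" using x by simp
    finally have "card {y \<in> {1..n}. lt y x} \<le> n - 1" .
    moreover have "k = Suc (card {y \<in> {1..n}. lt y x})" using x unfolding g_def by simp
    moreover have "n \<ge> 1" using x by simp
    ultimately show "k \<in> {1..n}" by simp
  qed
  have "g ` {1..n} = {1..n}"
    using into inj by (simp add: card_image card_subset_eq)
  then have "bij_betw g {1..n} {1..n}" using inj unfolding bij_betw_def by simp
  moreover have "g x = x" if "x \<notin> {1..n}" for x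
    unfolding g_def using that by (rule if_not_P)
  ultimately have "g permutes {1..n}" by (rule bij_imp_permutes)
  then show ?thesis using ord by (intro exI[of _ g]) simp
qed


definition edges :: "nat set set \<Rightarrow> (nat set \<Rightarrow> nat) \<Rightarrow> (nat \<times> nat) set" where
  "edges HH Ori = {(Ori I, h) | I h. I \<in> HH \<and> h \<in> I - {Ori I}}"

lemma prec_eq: "prec HH Ori = (edges HH Ori)\<^sup>+"
  unfolding prec_def edges_def by (rule refl)

lemma edgeI: "I \<in> HH \<Longrightarrow> h \<in> I \<Longrightarrow> h \<noteq> Ori I \<Longrightarrow> (Ori I, h) \<in> edges HH Ori"
  unfolding edges_def by blast

lemma edgeE:
  assumes "(x, y) \<in> edges HH Ori"
  obtains I where "I \<in> HH" "x = Ori I" "y \<in> I" "y \<noteq> Ori I"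
  using assms unfolding edges_def by blast

lemma Or_perm_char:
  assumes g: "g permutes {1..(n::nat)}" and I: "I \<subseteq> {1..n}" and m: "m \<in> I"
    and min: "\<And>h. h \<in> I \<Longrightarrow> g m \<le> g h"
  shows "Or_perm (inv g) I = m"
proof -
  have gm: "g m \<in> {1..n}" using perm_range[OF g] m I by auto
  have inv1: "inv g (g k) = k" for k using permutes_inverses(2)[OF g] by simp
  have inv2: "g (inv g k) = k" for k using permutes_inverses(1)[OF g] by simp
  have "(LEAST j. j \<ge> 1 \<and> inv g j \<in> I) = g m"
  proof (rule Least_equality)
    show "1 \<le> g m \<and> inv g (g m) \<in> I" using gm m inv1 by simp
  next
    fix j assume "1 \<le> j \<and> inv g j \<in> I"
    then have "g m \<le> g (inv g j)" using min by simp
    then show "g m \<le> j" using inv2 by simp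
  qed
  then show ?thesis unfolding Or_perm_def using inv1 by simp
qed

lemma Or_perm_min:
  assumes g: "g permutes {1..(n::nat)}" and I: "I \<subseteq> {1..n}" "I \<noteq> {}"
  shows "Or_perm (inv g) I \<in> I \<and> (\<forall>h\<in>I. g (Or_perm (inv g) I) \<le> g h)"
proof -
  obtain m0 where "m0 \<in> I" using I by auto
  then obtain m where m: "m \<in> I" "\<And>h. h \<in> I \<Longrightarrow> g m \<le> g h"
    using ex_has_least_nat[of "\<lambda>x. x \<in> I" m0 g] by auto
  have "Or_perm (inv g) I = m" by (rule Or_perm_char[OF g I(1) m])
  then show ?thesis using m by simp
qed

lemma Or_perm_iff:
  assumes g: "g permutes {1..(n::nat)}" and I: "I \<subseteq> {1..n}" "I \<noteq> {}"
  shows "Or_perm (inv g) I = m \<longleftrightarrow> m \<in> I \<and> (\<forall>h\<in>I. g m \<le> g h)"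
proof
  assume "Or_perm (inv g) I = m"
  then show "m \<in> I \<and> (\<forall>h\<in>I. g m \<le> g h)" using Or_perm_min[OF g I] by simp
next
  assume "m \<in> I \<and> (\<forall>h\<in>I. g m \<le> g h)"
  then show "Or_perm (inv g) I = m" using Or_perm_char[OF g I(1)] by simp
qed

locale ihg =
  fixes n :: nat and HH :: "nat set set"
  assumes ih: "interval_hypergraph n HH" and ci: "closed_under_intersection HH"
begin

lemma shape: "I \<in> HH \<Longrightarrow> \<exists>a b. 1 \<le> a \<and> a \<le> b \<and> b \<le> n \<and> I = {a..b}"
  using ih unfolding interval_hypergraph_def by simp

lemma I_sub: "I \<in> HH \<Longrightarrow> I \<subseteq> {1..n}"
  using shape by fastforce

lemma I_ne: "I \<in> HH \<Longrightarrow> I \<noteq> {}"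
  using shape by fastforce

lemma I_conv: "I \<in> HH \<Longrightarrow> x \<in> I \<Longrightarrow> y \<in> I \<Longrightarrow> x \<le> z \<Longrightarrow> z \<le> y \<Longrightarrow> z \<in> I"
proof -
  assume "I \<in> HH" "x \<in> I" "y \<in> I" "x \<le> z" "z \<le> y"
  moreover obtain a b where "I = {a..b}" using shape[OF \<open>I \<in> HH\<close>] by auto
  ultimately show "z \<in> I" by simp
qed

lemma I_int: "I \<in> HH \<Longrightarrow> J \<in> HH \<Longrightarrow> x \<in> I \<Longrightarrow> x \<in> J \<Longrightarrow> I \<inter> J \<in> HH"
  using ci unfolding closed_under_intersection_def by blast

lemma edges_sub:
  assumes "orientation HH Ori" shows "edges HH Ori \<subseteq> {1..n} \<times> {1..n}"
proof
  fix p assume "p \<in> edges HH Ori"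
  then obtain x y where p: "p = (x, y)" "(x, y) \<in> edges HH Ori" by (cases p) auto
  then obtain I where I: "I \<in> HH" "x = Ori I" "y \<in> I" by (auto elim: edgeE)
  have "Ori I \<in> I" using assms I(1) unfolding orientation_def by simp
  then show "p \<in> {1..n} \<times> {1..n}" using I I_sub[OF I(1)] p by auto
qed

lemma prec_sub:
  assumes "orientation HH Ori" "(x, y) \<in> (edges HH Ori)\<^sup>+" shows "x \<in> {1..n} \<and> y \<in> {1..n}"
  using trancl_subset_Sigma[OF edges_sub[OF assms(1)]] assms(2) by auto

lemma betw:
  assumes "orientation HH Ori" "(x, y) \<in> (edges HH Ori)\<^sup>+"
  shows "x < z \<and> z < y \<or> y < z \<and> z < x \<Longrightarrow> (x, z) \<in> (edges HH Ori)\<^sup>+"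
  using assms(2)
proof (induction arbitrary: z rule: trancl_induct)
  case (base y)
  then obtain I where I: "I \<in> HH" "x = Ori I" "y \<in> I" by (auto elim: edgeE)
  have xI: "x \<in> I" using assms(1) I unfolding orientation_def by simp
  have "z \<in> I"
  proof (cases "x < z")
    case True then show ?thesis using base.prems I_conv[OF I(1) xI I(3)] by auto
  next
    case False then show ?thesis using base.prems I_conv[OF I(1) I(3) xI] by auto
  qed
  moreover have "z \<noteq> Ori I" using base.prems I(2) by auto
  ultimately have "(x, z) \<in> edges HH Ori" using edgeI[OF I(1)] I(2) by simp
  then show ?case by simp
next
  case (step y w)
  show ?case
  proof (cases "z = y")
    case True then show ?thesis using step.hyps(1) by simp
  next
    case False
    show ?thesis
    proof (cases "x < z \<and> z < y \<or> y < z \<and> z < x")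
      case True then show ?thesis using step.IH by simp
    next
      case False2: False
      then have zb: "y < z \<and> z < w \<or> w < z \<and> z < y" using step.prems False by auto
      obtain I where I: "I \<in> HH" "y = Ori I" "w \<in> I" using step.hyps(2) by (auto elim: edgeE)
      have yI: "y \<in> I" using assms(1) I unfolding orientation_def by simp
      have "z \<in> I"
      proof (cases "y < z")
        case True then show ?thesis using zb I_conv[OF I(1) yI I(3)] by auto
      next
        case False then show ?thesis using zb I_conv[OF I(1) I(3) yI] by auto
      qed
      moreover have "z \<noteq> Ori I" using zb I(2) by auto
      ultimately have "(y, z) \<in> edges HH Ori" using edgeI[OF I(1)] I(2) by simp
      then show ?thesis using step.hyps(1) by simp
    qed
  qed
qed

lemma irrefl_prec:
  assumes "acyclic_orientation HH Ori" shows "(x, x) \<notin> (edges HH Ori)\<^sup>+"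
proof
  assume "(x, x) \<in> (edges HH Ori)\<^sup>+"
  then obtain k where k: "k > 0" "(x, x) \<in> (edges HH Ori) ^^ k"
    using trancl_power by blast
  then obtain f where f: "f 0 = x" "f k = x" "\<And>i. i < k \<Longrightarrow> (f i, f (Suc i)) \<in> edges HH Ori"
    using relpow_fun_conv[of x x k "edges HH Ori"] by auto
  have ex: "\<exists>I. I \<in> HH \<and> f i = Ori I \<and> f (Suc i) \<in> I \<and> f (Suc i) \<noteq> Ori I" if "i < k" for i
    using f(3)[OF that] by (auto elim: edgeE)
  define Hs where "Hs i = (SOME I. I \<in> HH \<and> f i = Ori I \<and> f (Suc i) \<in> I \<and> f (Suc i) \<noteq> Ori I)" for i
  have Hs: "Hs i \<in> HH \<and> f i = Ori (Hs i) \<and> f (Suc i) \<in> Hs i \<and> f (Suc i) \<noteq> Ori (Hs i)" if "i < k" for i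
    unfolding Hs_def using someI_ex[OF ex[OF that]] .
  have k2: "k \<ge> 2"
  proof (rule ccontr)
    assume "\<not> k \<ge> 2"
    then have "k = 1" using k(1) by simp
    then show False using Hs[of 0] f(1,2) by simp
  qed
  have "\<forall>i<k. Hs i \<in> HH" using Hs by simp
  moreover have "\<forall>i<k. Ori (Hs ((i + 1) mod k)) \<in> Hs i - {Ori (Hs i)}"
  proof (intro allI impI)
    fix i assume i: "i < k"
    have "Ori (Hs ((i + 1) mod k)) = f (Suc i)"
    proof (cases "Suc i < k")
      case True then show ?thesis using Hs[OF True] by simp
    next
      case False
      then have "Suc i = k" using i by simp
      then have "(i + 1) mod k = 0" by simp
      then show ?thesis using Hs[of 0] k(1) f(1,2) \<open>Suc i = k\<close> by simp
    qed
    then show "Ori (Hs ((i + 1) mod k)) \<in> Hs i - {Ori (Hs i)}" using Hs[OF i] by simp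
  qed
  ultimately show False using assms k2 unfolding acyclic_orientation_def by blast
qed

lemma sub_or:
  assumes "acyclic_orientation HH Ori" "L \<in> HH" "H \<in> HH" "L \<subseteq> H" "Ori H \<in> L"
  shows "Ori L = Ori H"
proof (rule ccontr)
  assume ne: "Ori L \<noteq> Ori H"
  have OL: "Ori L \<in> L" using assms(1,2) unfolding acyclic_orientation_def orientation_def by simp
  have "(Ori H, Ori L) \<in> edges HH Ori" using edgeI[OF assms(3)] OL assms(4) ne by auto
  moreover have "(Ori L, Ori H) \<in> edges HH Ori" using edgeI[OF assms(2) assms(5)] ne by auto
  ultimately have "(Ori H, Ori H) \<in> (edges HH Ori)\<^sup>+" by simp
  then show False using irrefl_prec[OF assms(1)] by simp
qed

end

lemma lts_trans:
  fixes P :: "(nat \<times> nat) set"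
  assumes trP: "\<And>a b c. (a,b)\<in>P \<Longrightarrow> (b,c)\<in>P \<Longrightarrow> (a,c)\<in>P"
    and bt: "\<And>a b c. (a,b)\<in>P \<Longrightarrow> a<c \<and> c<b \<or> b<c \<and> c<a \<Longrightarrow> (a,c)\<in>P"
    and xy: "(x<y \<and> (y,x)\<notin>P) \<or> (y<x \<and> (x,y)\<in>P)"
    and yz: "(y<z \<and> (z,y)\<notin>P) \<or> (z<y \<and> (y,z)\<in>P)"
  shows "(x<z \<and> (z,x)\<notin>P) \<or> (z<x \<and> (x,z)\<in>P)"
proof -
  consider (c1) "x<y" "(y,x)\<notin>P" "y<z" "(z,y)\<notin>P" | (c2) "x<y" "(y,x)\<notin>P" "z<y" "(y,z)\<in>P"
    | (c3) "y<x" "(x,y)\<in>P" "y<z" "(z,y)\<notin>P" | (c4) "y<x" "(x,y)\<in>P" "z<y" "(y,z)\<in>P"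
    using xy yz by argo
  then show ?thesis
  proof cases
    case c1
    have "(z,x)\<notin>P"
    proof
      assume "(z,x)\<in>P" then have "(z,y)\<in>P" using bt[of z x y] c1 by simp
      then show False using c1 by simp
    qed
    then show ?thesis using c1 by simp
  next
    case c2
    consider "x<z" | "z<x" | "z = x" by linarith
    then show ?thesis
    proof cases
      case 1
      have "(z,x)\<notin>P"
      proof
        assume "(z,x)\<in>P" then have "(y,x)\<in>P" using trP[of y z x] c2 by simp
        then show False using c2 by simp
      qed
      then show ?thesis using 1 by simp
    next
      case 2
      have "(y,x)\<in>P" using bt[of y z x] c2 2 by simp
      then show ?thesis using c2 by simp
    next
      case 3 then show ?thesis using c2 by simp
    qed
  next
    case c3
    consider "x<z" | "z<x" | "z = x" by linarith
    then show ?thesis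
    proof cases
      case 1
      have "(z,x)\<notin>P"
      proof
        assume "(z,x)\<in>P" then have "(z,y)\<in>P" using trP[of z x y] c3 by simp
        then show False using c3 by simp
      qed
      then show ?thesis using 1 by simp
    next
      case 2
      have "(x,z)\<in>P" using bt[of x y z] c3 2 by simp
      then show ?thesis using 2 by simp
    next
      case 3 then show ?thesis using c3 by simp
    qed
  next
    case c4
    then show ?thesis using trP[of x y z] by simp
  qed
qed

lemma ltt_trans:
  fixes P :: "(nat \<times> nat) set"
  assumes trP: "\<And>a b c. (a,b)\<in>P \<Longrightarrow> (b,c)\<in>P \<Longrightarrow> (a,c)\<in>P"
    and bt: "\<And>a b c. (a,b)\<in>P \<Longrightarrow> a<c \<and> c<b \<or> b<c \<and> c<a \<Longrightarrow> (a,c)\<in>P"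
    and xy: "(x<y \<and> (x,y)\<in>P) \<or> (y<x \<and> (y,x)\<notin>P)"
    and yz: "(y<z \<and> (y,z)\<in>P) \<or> (z<y \<and> (z,y)\<notin>P)"
  shows "(x<z \<and> (x,z)\<in>P) \<or> (z<x \<and> (z,x)\<notin>P)"
proof -
  consider (c1) "x<y" "(x,y)\<in>P" "y<z" "(y,z)\<in>P" | (c2) "x<y" "(x,y)\<in>P" "z<y" "(z,y)\<notin>P"
    | (c3) "y<x" "(y,x)\<notin>P" "y<z" "(y,z)\<in>P" | (c4) "y<x" "(y,x)\<notin>P" "z<y" "(z,y)\<notin>P"
    using xy yz by argo
  then show ?thesis
  proof cases
    case c1
    then show ?thesis using trP[of x y z] by simp
  next
    case c2
    consider "x<z" | "z<x" | "z = x" by linarith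
    then show ?thesis
    proof cases
      case 1
      have "(x,z)\<in>P" using bt[of x y z] c2 1 by simp
      then show ?thesis using 1 by simp
    next
      case 2
      have "(z,x)\<notin>P"
      proof
        assume "(z,x)\<in>P" then have "(z,y)\<in>P" using trP[of z x y] c2 by simp
        then show False using c2 by simp
      qed
      then show ?thesis using 2 by simp
    next
      case 3 then show ?thesis using c2 by simp
    qed
  next
    case c3
    consider "x<z" | "z<x" | "z = x" by linarith
    then show ?thesis
    proof cases
      case 1
      have "(y,x)\<in>P" using bt[of y z x] c3 1 by simp
      then show ?thesis using c3 by simp
    next
      case 2
      have "(z,x)\<notin>P"
      proof
        assume "(z,x)\<in>P" then have "(y,x)\<in>P" using trP[of y z x] c3 by simp
        then show False using c3 by simp
      qed
      then show ?thesis using 2 by simp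
    next
      case 3 then show ?thesis using c3 by simp
    qed
  next
    case c4
    have "(z,x)\<notin>P"
    proof
      assume "(z,x)\<in>P" then have "(z,y)\<in>P" using bt[of z x y] c4 by simp
      then show False using c4 by simp
    qed
    then show ?thesis using c4 by simp
  qed
qed

lemma inversions_pos_inv: "inversions \<pi> = pos_inv (inv \<pi>)"
  unfolding inversions_def pos_inv_def by (rule refl)

lemma perm_eq_inversions:
  assumes "\<pi> permutes {1..(n::nat)}" "\<rho> permutes {1..n}" "inversions \<pi> = inversions \<rho>"
  shows "\<pi> = \<rho>"
proof -
  have "inv \<pi> = inv \<rho>"
    using perm_eq_from_pos_inv[OF permutes_inv[OF assms(1)] permutes_inv[OF assms(2)]] assms(3)
    unfolding inversions_pos_inv by simp
  then show ?thesis using permutes_inv_inv[OF assms(1)] permutes_inv_inv[OF assms(2)] by metis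
qed

lemma the_min:
  assumes F: "\<And>\<pi>. \<pi> \<in> F \<Longrightarrow> \<pi> permutes {1..(n::nat)}" and s: "s \<in> F" "\<forall>\<rho>\<in>F. weak_le n s \<rho>"
  shows "(THE \<pi>. \<pi> \<in> F \<and> (\<forall>\<rho>\<in>F. weak_le n \<pi> \<rho>)) = s"
proof (rule the_equality)
  show "s \<in> F \<and> (\<forall>\<rho>\<in>F. weak_le n s \<rho>)" using s by simp
next
  fix \<pi> assume p: "\<pi> \<in> F \<and> (\<forall>\<rho>\<in>F. weak_le n \<pi> \<rho>)"
  then have "weak_le n \<pi> s" "weak_le n s \<pi>" using s by auto
  then have "inversions \<pi> = inversions s" unfolding weak_le_def by auto
  then show "\<pi> = s" using perm_eq_inversions F p s(1) by blast
qed

lemma the_max: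
  assumes F: "\<And>\<pi>. \<pi> \<in> F \<Longrightarrow> \<pi> permutes {1..(n::nat)}" and s: "s \<in> F" "\<forall>\<rho>\<in>F. weak_le n \<rho> s"
  shows "(THE \<pi>. \<pi> \<in> F \<and> (\<forall>\<rho>\<in>F. weak_le n \<rho> \<pi>)) = s"
proof (rule the_equality)
  show "s \<in> F \<and> (\<forall>\<rho>\<in>F. weak_le n \<rho> s)" using s by simp
next
  fix \<pi> assume p: "\<pi> \<in> F \<and> (\<forall>\<rho>\<in>F. weak_le n \<rho> \<pi>)"
  then have "weak_le n \<pi> s" "weak_le n s \<pi>" using s by auto
  then have "inversions \<pi> = inversions s" unfolding weak_le_def by auto
  then show "\<pi> = s" using perm_eq_inversions F p s(1) by blast
qed

context ihg
begin

lemma fiber_iff: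
  assumes ac: "acyclic_orientation HH Ori" and g: "g permutes {1..n}"
  shows "inv g \<in> fiber n HH Ori \<longleftrightarrow> (\<forall>x y. (x, y) \<in> (edges HH Ori)\<^sup>+ \<longrightarrow> g x < g y)"
proof
  have or: "orientation HH Ori" using ac unfolding acyclic_orientation_def by simp
  assume "inv g \<in> fiber n HH Ori"
  then have f: "\<And>I. I \<in> HH \<Longrightarrow> Or_perm (inv g) I = Ori I" unfolding fiber_def by simp
  have ig: "inj g" by (rule permutes_inj[OF g])
  show "\<forall>x y. (x, y) \<in> (edges HH Ori)\<^sup>+ \<longrightarrow> g x < g y"
  proof (intro allI impI)
    fix x y assume "(x, y) \<in> (edges HH Ori)\<^sup>+"
    then show "g x < g y"
    proof (induction rule: trancl_induct)
      case (base y)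
      then obtain I where I: "I \<in> HH" "x = Ori I" "y \<in> I" "y \<noteq> Ori I" by (auto elim: edgeE)
      have "\<forall>h\<in>I. g (Ori I) \<le> g h"
        using conjunct2[OF Or_perm_iff[OF g I_sub[OF I(1)] I_ne[OF I(1)], THEN iffD1, OF f[OF I(1)]]] .
      then have "g x \<le> g y" using I by simp
      moreover have "g x \<noteq> g y" using ig I(2,4) by (auto dest: injD)
      ultimately show ?case by simp
    next
      case (step y z)
      then obtain I where I: "I \<in> HH" "y = Ori I" "z \<in> I" "z \<noteq> Ori I" by (auto elim: edgeE)
      have "\<forall>h\<in>I. g (Ori I) \<le> g h"
        using conjunct2[OF Or_perm_iff[OF g I_sub[OF I(1)] I_ne[OF I(1)], THEN iffD1, OF f[OF I(1)]]] .
      then have "g y \<le> g z" using I by simp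
      moreover have "g y \<noteq> g z" using ig I(2,4) by (auto dest: injD)
      ultimately show ?case using step.IH by simp
    qed
  qed
next
  have or: "orientation HH Ori" using ac unfolding acyclic_orientation_def by simp
  assume h: "\<forall>x y. (x, y) \<in> (edges HH Ori)\<^sup>+ \<longrightarrow> g x < g y"
  have "Or_perm (inv g) I = Ori I" if I: "I \<in> HH" for I
  proof -
    have "Ori I \<in> I" using or I unfolding orientation_def by simp
    moreover have "g (Ori I) \<le> g k" if "k \<in> I" for k
    proof (cases "k = Ori I")
      case False
      then have "(Ori I, k) \<in> edges HH Ori" using edgeI[OF I that] by simp
      then have "(Ori I, k) \<in> (edges HH Ori)\<^sup>+" by (rule r_into_trancl)
      then have "g (Ori I) < g k" using h by simp
      then show ?thesis by simp
    qed simp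
    ultimately show ?thesis using Or_perm_iff[OF g I_sub[OF I] I_ne[OF I]] by simp
  qed
  then show "inv g \<in> fiber n HH Ori" unfolding fiber_def using permutes_inv[OF g] by simp
qed

lemma fiber_perm: "\<pi> \<in> fiber n HH Ori \<Longrightarrow> \<pi> permutes {1..n}"
  unfolding fiber_def by simp

lemma fiber_iff':
  assumes ac: "acyclic_orientation HH Ori" and r: "\<rho> \<in> fiber n HH Ori"
  shows "\<forall>x y. (x, y) \<in> (edges HH Ori)\<^sup>+ \<longrightarrow> inv \<rho> x < inv \<rho> y"
proof -
  have p: "\<rho> permutes {1..n}" using r by (rule fiber_perm)
  have "inv (inv \<rho>) \<in> fiber n HH Ori" using r permutes_inv_inv[OF p] by simp
  then show ?thesis using fiber_iff[OF ac permutes_inv[OF p]] by simp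
qed

lemma sigma_facts:
  assumes ac: "acyclic_orientation HH Ori"
  shows "\<exists>g. g permutes {1..n} \<and> sigma_of n HH Ori = inv g \<and> inv g \<in> fiber n HH Ori \<and>
     (\<forall>a b. (a, b) \<in> pos_inv g \<longrightarrow> a \<in> {1..n} \<and> b \<in> {1..n} \<and> a < b \<and> (b, a) \<in> prec HH Ori)"
proof -
  have or: "orientation HH Ori" using ac unfolding acyclic_orientation_def by simp
  define P where "P = (edges HH Ori)\<^sup>+"
  have trP: "\<And>a b c. (a,b)\<in>P \<Longrightarrow> (b,c)\<in>P \<Longrightarrow> (a,c)\<in>P" unfolding P_def by simp
  have irP: "\<And>a. (a,a)\<notin>P" unfolding P_def using irrefl_prec[OF ac] by simp
  have bt: "\<And>a b c. (a,b)\<in>P \<Longrightarrow> a<c \<and> c<b \<or> b<c \<and> c<a \<Longrightarrow> (a,c)\<in>P"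
    unfolding P_def using betw[OF or] by blast
  define lt where "lt a b = ((a<b \<and> (b,a)\<notin>P) \<or> (b<a \<and> (a,b)\<in>P))" for a b
  have "\<exists>g. g permutes {1..n} \<and> (\<forall>x\<in>{1..n}. \<forall>y\<in>{1..n}. g x < g y \<longleftrightarrow> lt x y)"
  proof (rule perm_of_order)
    show "\<And>x. \<not> lt x x" unfolding lt_def by simp
    show "lt x z" if a: "lt x y" "lt y z" for x y z
      unfolding lt_def
    proof (rule lts_trans[of P x y z])
      show "\<And>a b c. (a,b)\<in>P \<Longrightarrow> (b,c)\<in>P \<Longrightarrow> (a,c)\<in>P" by (rule trP)
      show "\<And>a b c. (a,b)\<in>P \<Longrightarrow> a<c \<and> c<b \<or> b<c \<and> c<a \<Longrightarrow> (a,c)\<in>P" by (rule bt)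
    qed (use a in \<open>simp_all add: lt_def\<close>)
    show "\<And>x y. x \<noteq> y \<Longrightarrow> lt x y \<or> lt y x" unfolding lt_def by auto
  qed
  then obtain g where g: "g permutes {1..n}" and ord: "\<And>x y. x\<in>{1..n} \<Longrightarrow> y\<in>{1..n} \<Longrightarrow> g x < g y \<longleftrightarrow> lt x y"
    by blast
  have gP: "g x < g y" if "(x, y) \<in> P" for x y
  proof -
    have xy: "x \<in> {1..n}" "y \<in> {1..n}" using prec_sub[OF or] that unfolding P_def by auto
    have "(y, x) \<notin> P" using trP[OF that] irP by blast
    moreover have "x \<noteq> y" using that irP by auto
    ultimately have "lt x y" using that unfolding lt_def by auto
    then show ?thesis using ord[OF xy] by simp
  qed
  have fib: "inv g \<in> fiber n HH Ori" using fiber_iff[OF ac g] gP unfolding P_def by blast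
  have desc: "a \<in> {1..n} \<and> b \<in> {1..n} \<and> a < b \<and> (b, a) \<in> P" if "(a, b) \<in> pos_inv g" for a b
  proof -
    have ab: "a \<in> {1..n}" "b \<in> {1..n}" using pos_inv_sub[OF g that] by auto
    have "a < b" "g b < g a" using that unfolding pos_inv_def by auto
    then show ?thesis using ord[OF ab(2,1)] ab unfolding lt_def by auto
  qed
  have min: "\<forall>\<rho>\<in>fiber n HH Ori. weak_le n (inv g) \<rho>"
  proof
    fix \<rho> assume r: "\<rho> \<in> fiber n HH Ori"
    have rp: "\<rho> permutes {1..n}" using r by (rule fiber_perm)
    have h: "\<And>x y. (x, y) \<in> P \<Longrightarrow> inv \<rho> x < inv \<rho> y" using fiber_iff'[OF ac r] unfolding P_def by blast
    have "pos_inv g \<subseteq> pos_inv (inv \<rho>)"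
    proof
      fix p assume "p \<in> pos_inv g"
      then obtain a b where p: "p = (a, b)" "(a, b) \<in> pos_inv g" by (cases p) auto
      then have "a < b" "(b, a) \<in> P" using desc by auto
      then show "p \<in> pos_inv (inv \<rho>)" using h p(1) unfolding pos_inv_def by auto
    qed
    then show "weak_le n (inv g) \<rho>"
      unfolding weak_le_def using permutes_inv[OF g] rp inversions_inv[OF g] inversions_pos_inv by simp
  qed
  have "sigma_of n HH Ori = inv g"
    unfolding sigma_of_def by (rule the_min[OF fiber_perm fib min])
  then show ?thesis using g fib desc unfolding P_def prec_eq by blast
qed

lemma tau_facts:
  assumes ac: "acyclic_orientation HH Ori"
  shows "\<exists>g. g permutes {1..n} \<and> tau_of n HH Ori = inv g \<and> inv g \<in> fiber n HH Ori \<and>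
     (\<forall>a b. a \<in> {1..n} \<longrightarrow> b \<in> {1..n} \<longrightarrow> a < b \<longrightarrow> (a, b) \<notin> prec HH Ori \<longrightarrow> (a, b) \<in> pos_inv g)"
proof -
  have or: "orientation HH Ori" using ac unfolding acyclic_orientation_def by simp
  define P where "P = (edges HH Ori)\<^sup>+"
  have trP: "\<And>a b c. (a,b)\<in>P \<Longrightarrow> (b,c)\<in>P \<Longrightarrow> (a,c)\<in>P" unfolding P_def by simp
  have irP: "\<And>a. (a,a)\<notin>P" unfolding P_def using irrefl_prec[OF ac] by simp
  have bt: "\<And>a b c. (a,b)\<in>P \<Longrightarrow> a<c \<and> c<b \<or> b<c \<and> c<a \<Longrightarrow> (a,c)\<in>P"
    unfolding P_def using betw[OF or] by blast
  define lt where "lt a b = ((a<b \<and> (a,b)\<in>P) \<or> (b<a \<and> (b,a)\<notin>P))" for a b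
  have "\<exists>g. g permutes {1..n} \<and> (\<forall>x\<in>{1..n}. \<forall>y\<in>{1..n}. g x < g y \<longleftrightarrow> lt x y)"
  proof (rule perm_of_order)
    show "\<And>x. \<not> lt x x" unfolding lt_def by simp
    show "lt x z" if a: "lt x y" "lt y z" for x y z
      unfolding lt_def
    proof (rule ltt_trans[of P x y z])
      show "\<And>a b c. (a,b)\<in>P \<Longrightarrow> (b,c)\<in>P \<Longrightarrow> (a,c)\<in>P" by (rule trP)
      show "\<And>a b c. (a,b)\<in>P \<Longrightarrow> a<c \<and> c<b \<or> b<c \<and> c<a \<Longrightarrow> (a,c)\<in>P" by (rule bt)
    qed (use a in \<open>simp_all add: lt_def\<close>)
    show "\<And>x y. x \<noteq> y \<Longrightarrow> lt x y \<or> lt y x" unfolding lt_def by auto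
  qed
  then obtain g where g: "g permutes {1..n}" and ord: "\<And>x y. x\<in>{1..n} \<Longrightarrow> y\<in>{1..n} \<Longrightarrow> g x < g y \<longleftrightarrow> lt x y"
    by blast
  have gP: "g x < g y" if "(x, y) \<in> P" for x y
  proof -
    have xy: "x \<in> {1..n}" "y \<in> {1..n}" using prec_sub[OF or] that unfolding P_def by auto
    have "(y, x) \<notin> P" using trP[OF that] irP by blast
    moreover have "x \<noteq> y" using that irP by auto
    ultimately have "lt x y" using that unfolding lt_def by auto
    then show ?thesis using ord[OF xy] by simp
  qed
  have fib: "inv g \<in> fiber n HH Ori" using fiber_iff[OF ac g] gP unfolding P_def by blast
  have desc: "(a, b) \<in> pos_inv g" if "a \<in> {1..n}" "b \<in> {1..n}" "a < b" "(a, b) \<notin> P" for a b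
  proof -
    have "lt b a" using that unfolding lt_def by simp
    then show ?thesis using ord[OF that(2,1)] that(3) unfolding pos_inv_def by simp
  qed
  have max: "\<forall>\<rho>\<in>fiber n HH Ori. weak_le n \<rho> (inv g)"
  proof
    fix \<rho> assume r: "\<rho> \<in> fiber n HH Ori"
    have rp: "\<rho> permutes {1..n}" using r by (rule fiber_perm)
    have h: "\<And>x y. (x, y) \<in> P \<Longrightarrow> inv \<rho> x < inv \<rho> y" using fiber_iff'[OF ac r] unfolding P_def by blast
    have "pos_inv (inv \<rho>) \<subseteq> pos_inv g"
    proof
      fix p assume "p \<in> pos_inv (inv \<rho>)"
      then obtain a b where p: "p = (a, b)" "(a, b) \<in> pos_inv (inv \<rho>)" by (cases p) auto
      have ab: "a \<in> {1..n}" "b \<in> {1..n}" using pos_inv_sub[OF permutes_inv[OF rp] p(2)] by auto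
      have lt2: "a < b" "inv \<rho> b < inv \<rho> a" using p(2) unfolding pos_inv_def by auto
      then have "(a, b) \<notin> P" using h by fastforce
      then show "p \<in> pos_inv g" using desc[OF ab lt2(1)] p(1) by simp
    qed
    then show "weak_le n \<rho> (inv g)"
      unfolding weak_le_def using permutes_inv[OF g] rp inversions_inv[OF g] inversions_pos_inv by simp
  qed
  have "tau_of n HH Ori = inv g"
    unfolding tau_of_def by (rule the_max[OF fiber_perm fib max])
  then show ?thesis using g fib desc unfolding P_def prec_eq by blast
qed

end

definition OrF :: "nat set set \<Rightarrow> (nat \<Rightarrow> nat) \<Rightarrow> nat set \<Rightarrow> nat" where
  "OrF HH g = (\<lambda>I. if I \<in> HH then Or_perm (inv g) I else undefined)"

lemma pos_inv_swap:
  assumes g: "g permutes {1..(n::nat)}" and xy: "x < y" "g y = Suc (g x)"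
  shows "pos_inv (g \<circ> Transposition.transpose x y) = insert (x, y) (pos_inv g)"
proof -
  have ig: "inj g" by (rule permutes_inj[OF g])
  have ne: "g a \<noteq> g x" "g a \<noteq> g y" if "a \<noteq> x" "a \<noteq> y" for a
    using that ig by (auto dest: injD)
  have cmp: "(g a < g x \<longleftrightarrow> g a < g y) \<and> (g x < g a \<longleftrightarrow> g y < g a)" if "a \<noteq> x" "a \<noteq> y" for a
    using ne[OF that] xy(2) by auto
  define g' where "g' = g \<circ> Transposition.transpose x y"
  have g'x: "g' x = g y" and g'y: "g' y = g x" and g'o: "\<And>a. a \<noteq> x \<Longrightarrow> a \<noteq> y \<Longrightarrow> g' a = g a"
    unfolding g'_def by auto
  have eq: "(a, b) \<in> pos_inv g' \<longleftrightarrow> (a, b) \<in> insert (x, y) (pos_inv g)" for a b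
  proof (cases "a = x \<and> b = y")
    case True then show ?thesis using g'x g'y xy unfolding pos_inv_def by auto
  next
    case False
    have "g' b < g' a \<longleftrightarrow> g b < g a" if ab: "a < b"
    proof -
      consider "a \<noteq> x" "a \<noteq> y" "b \<noteq> x" "b \<noteq> y" | "a = x" "b \<noteq> x" "b \<noteq> y" | "a = y" "b \<noteq> x" "b \<noteq> y"
        | "b = x" "a \<noteq> x" "a \<noteq> y" | "b = y" "a \<noteq> x" "a \<noteq> y" | "a = y" "b = x"
        using False ab by auto
      then show ?thesis
      proof cases
        case 1 then show ?thesis using g'o by simp
      next
        case 2 then show ?thesis using g'x g'o[of b] cmp[of b] by simp
      next
        case 3 then show ?thesis using g'y g'o[of b] cmp[of b] by simp
      next
        case 4 then show ?thesis using g'x g'o[of a] cmp[of a] by simp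
      next
        case 5 then show ?thesis using g'y g'o[of a] cmp[of a] by simp
      next
        case 6 then show ?thesis using ab xy by simp
      qed
    qed
    then show ?thesis using False unfolding pos_inv_def by auto
  qed
  show ?thesis unfolding g'_def[symmetric] using eq by auto
qed

lemma adjacent:
  assumes g: "g permutes {1..(n::nat)}" and q: "q permutes {1..n}"
    and sub: "pos_inv g \<subseteq> pos_inv q" and ne: "pos_inv g \<noteq> pos_inv q"
  shows "\<exists>x y. x \<in> {1..n} \<and> y \<in> {1..n} \<and> x < y \<and> g y = Suc (g x) \<and> (x, y) \<in> pos_inv q \<and> (x, y) \<notin> pos_inv g"
proof -
  define D where "D = pos_inv q - pos_inv g"
  obtain p0 where "p0 \<in> D" using sub ne unfolding D_def by auto
  then obtain p where p: "p \<in> D" and pmin: "\<And>p'. p' \<in> D \<Longrightarrow> g (snd p) - g (fst p) \<le> g (snd p') - g (fst p')"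
    using ex_has_least_nat[of "\<lambda>p. p \<in> D" p0 "\<lambda>p. g (snd p) - g (fst p)"] by auto
  obtain a b where ab: "p = (a, b)" by (cases p)
  have ig: "inj g" by (rule permutes_inj[OF g])
  have iq: "inj q" by (rule permutes_inj[OF q])
  have abn: "a \<in> {1..n}" "b \<in> {1..n}" using pos_inv_sub[OF q] p ab unfolding D_def by auto
  have ablt: "a < b" "q b < q a" using p ab unfolding D_def pos_inv_def by auto
  have "\<not> g b < g a" using p ab ablt unfolding D_def pos_inv_def by auto
  moreover have "g a \<noteq> g b" using ig ablt(1) by (auto dest: injD)
  ultimately have gab: "g a < g b" by simp
  have min': "g b - g a \<le> g d - g c" if "(c, d) \<in> D" for c d
    using pmin[OF that] ab by simp
  have "g b = Suc (g a)"
  proof (rule ccontr)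
    assume "g b \<noteq> Suc (g a)"
    then have lt: "Suc (g a) < g b" using gab by simp
    have gbn: "g b \<in> {1..n}" using perm_range[OF g abn(2)] .
    then have sn: "Suc (g a) \<in> {1..n}" using lt by auto
    define c where "c = inv g (Suc (g a))"
    have cn: "c \<in> {1..n}" unfolding c_def using perm_range[OF permutes_inv[OF g] sn] .
    have gc: "g c = Suc (g a)" unfolding c_def using permutes_inverses(1)[OF g] by simp
    consider "a < c" | "c < a" | "c = a" by linarith
    then show False
    proof cases
      case 1
      have "(a, c) \<notin> D"
      proof
        assume "(a, c) \<in> D"
        then have "g b - g a \<le> g c - g a" by (rule min')
        then show False using gc lt by simp
      qed
      moreover have "(a, c) \<notin> pos_inv g" using gc unfolding pos_inv_def by simp
      ultimately have "(a, c) \<notin> pos_inv q" unfolding D_def by simp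
      then have qac: "q a \<le> q c" using 1 unfolding pos_inv_def by simp
      consider "c < b" | "b < c" | "c = b" by linarith
      then show False
      proof cases
        case 1
        have "(c, b) \<in> D" using 1 qac ablt gc lt unfolding D_def pos_inv_def by auto
        then have "g b - g a \<le> g b - g c" by (rule min')
        then show False using gc lt by simp
      next
        case 2
        have "(b, c) \<in> pos_inv g" using 2 gc lt unfolding pos_inv_def by simp
        then have "(b, c) \<in> pos_inv q" using sub by blast
        then show False using qac ablt unfolding pos_inv_def by simp
      next
        case 3 then show False using gc lt by simp
      qed
    next
      case 2
      have "(c, a) \<in> pos_inv g" using 2 gc unfolding pos_inv_def by simp
      then have "(c, a) \<in> pos_inv q" using sub by blast
      then have qca: "q a < q c" unfolding pos_inv_def by simp
      have "(c, b) \<in> D" using 2 qca ablt gc lt unfolding D_def pos_inv_def by auto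
      then have "g b - g a \<le> g b - g c" by (rule min')
      then show False using gc lt by simp
    next
      case 3 then show False using gc by simp
    qed
  qed
  then show ?thesis using abn ablt p ab unfolding D_def by blast
qed

context ihg
begin

lemma OrF_iff:
  assumes g: "g permutes {1..n}" and I: "I \<in> HH"
  shows "OrF HH g I = m \<longleftrightarrow> m \<in> I \<and> (\<forall>h\<in>I. g m \<le> g h)"
  unfolding OrF_def using Or_perm_iff[OF g I_sub[OF I] I_ne[OF I]] I by simp

lemma OrF_min:
  assumes g: "g permutes {1..n}" and I: "I \<in> HH"
  shows "OrF HH g I \<in> I \<and> (\<forall>h\<in>I. g (OrF HH g I) \<le> g h)"
  using OrF_iff[OF g I, of "OrF HH g I"] by simp

lemma OrF_acyclic:
  assumes g: "g permutes {1..n}"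
  shows "acyclic_orientation HH (OrF HH g)"
proof -
  have ig: "inj g" by (rule permutes_inj[OF g])
  have or: "orientation HH (OrF HH g)"
    unfolding orientation_def using OrF_min[OF g] by (simp add: OrF_def)
  have nc: False if k: "k \<ge> 2" and H: "\<forall>i<k. Hs i \<in> HH"
    and cyc: "\<forall>i<k. OrF HH g (Hs ((i + 1) mod k)) \<in> Hs i - {OrF HH g (Hs i)}" for k :: nat and Hs :: "nat \<Rightarrow> nat set"
  proof -
    define f where "f i = g (OrF HH g (Hs i))" for i
    have st: "f i < f ((i + 1) mod k)" if i: "i < k" for i
    proof -
      have m: "\<forall>h\<in>Hs i. g (OrF HH g (Hs i)) \<le> g h" using OrF_min[OF g] H i by simp
      have "OrF HH g (Hs ((i + 1) mod k)) \<in> Hs i" "OrF HH g (Hs ((i + 1) mod k)) \<noteq> OrF HH g (Hs i)"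
        using cyc i by auto
      then have "g (OrF HH g (Hs i)) \<le> g (OrF HH g (Hs ((i + 1) mod k)))"
        "g (OrF HH g (Hs ((i + 1) mod k))) \<noteq> g (OrF HH g (Hs i))"
        using m ig by (auto dest: injD)
      then show ?thesis unfolding f_def by simp
    qed
    have mono: "i < k \<Longrightarrow> f 0 \<le> f i" for i
    proof (induction i)
      case (Suc i)
      then have "(i + 1) mod k = Suc i" by simp
      then show ?case using st[of i] Suc by simp
    qed simp
    have "k - 1 < k" using k by simp
    moreover have "(k - 1 + 1) mod k = 0" using k by simp
    ultimately have "f (k - 1) < f 0" using st[of "k - 1"] by simp
    then show False using mono[of "k - 1"] k by simp
  qed
  show ?thesis unfolding acyclic_orientation_def using or nc by blast
qed

lemma OrF_fiber:
  assumes "orientation HH Ori" "\<pi> \<in> fiber n HH Ori"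
  shows "OrF HH (inv \<pi>) = Ori"
proof
  fix I
  have p: "\<pi> permutes {1..n}" using assms(2) by (rule fiber_perm)
  show "OrF HH (inv \<pi>) I = Ori I"
  proof (cases "I \<in> HH")
    case True
    then show ?thesis using assms(2) permutes_inv_inv[OF p] unfolding OrF_def fiber_def by simp
  next
    case False
    then show ?thesis using assms(1) unfolding OrF_def orientation_def by simp
  qed
qed

lemma Or_swap:
  assumes g: "g permutes {1..n}" and xy: "x < y" "g y = Suc (g x)" and I: "I \<in> HH"
    and x_in: "x \<in> {1..n}" and y_in: "y \<in> {1..n}"
  shows "OrF HH (g \<circ> Transposition.transpose x y) I = (if OrF HH g I = x \<and> y \<in> I then y else OrF HH g I)"
proof -
  define g' where "g' = g \<circ> Transposition.transpose x y"
  have g': "g' permutes {1..n}" unfolding g'_def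
    by (rule permutes_compose[OF permutes_swap_id[OF x_in y_in] g])
  have ig: "inj g" by (rule permutes_inj[OF g])
  have g'x: "g' x = g y" and g'y: "g' y = g x" and g'o: "\<And>a. a \<noteq> x \<Longrightarrow> a \<noteq> y \<Longrightarrow> g' a = g a"
    unfolding g'_def by auto
  define m where "m = OrF HH g I"
  have m: "m \<in> I" "\<And>h. h \<in> I \<Longrightarrow> g m \<le> g h" using OrF_min[OF g I] unfolding m_def by auto
  have ne: "g a \<noteq> g b" if "a \<noteq> b" for a b using that ig by (auto dest: injD)
  show ?thesis unfolding g'_def[symmetric] m_def[symmetric]
  proof (cases "m = x \<and> y \<in> I")
    case True
    have "g' y \<le> g' h" if h: "h \<in> I" for h
    proof -
      consider "h = x" | "h = y" | "h \<noteq> x" "h \<noteq> y" by auto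
      then show ?thesis
      proof cases
        case 1 then show ?thesis using g'x g'y xy by simp
      next
        case 3 then show ?thesis using g'y g'o m(2)[OF h] True by simp
      qed simp
    qed
    then have "OrF HH g' I = y" using OrF_iff[OF g' I] True by simp
    then show "OrF HH g' I = (if m = x \<and> y \<in> I then y else m)" using True by simp
  next
    case False
    have "g' m \<le> g' h" if h: "h \<in> I" for h
    proof (cases "m = x")
      case True
      then have yI: "y \<notin> I" using False by simp
      show ?thesis
      proof (cases "h = x")
        case False
        then have "h \<noteq> y" using yI h by auto
        then show ?thesis using g'x g'o[OF False \<open>h \<noteq> y\<close>] m(2)[OF h] ne[OF False] True xy by simp
      qed (simp add: True)
    next
      case mx: False
      show ?thesis
      proof (cases "m = y")
        case True
        have "h \<noteq> x"
        proof
          assume "h = x"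
          then have "g m \<le> g x" using m(2) h by simp
          then show False using True xy by simp
        qed
        then show ?thesis
        proof (cases "h = y")
          case False
          then show ?thesis using g'y g'o[OF \<open>h \<noteq> x\<close> False] m(2)[OF h] True xy by simp
        qed (simp add: True)
      next
        case my: False
        have gm: "g' m = g m" using g'o mx my by simp
        have "g m \<noteq> g x" "g m \<noteq> g y" using ne mx my by auto
        moreover have "g m \<le> g y \<or> g m \<le> g h" using m(2)[OF h] by simp
        consider "h = x" | "h = y" | "h \<noteq> x" "h \<noteq> y" by auto
        then show ?thesis
        proof cases
          case 1 then show ?thesis using gm g'x m(2)[OF h] xy by simp
        next
          case 2
          have "g m \<le> g y" using m(2)[OF h] 2 by simp
          then show ?thesis using gm g'y 2 xy \<open>g m \<noteq> g x\<close> \<open>g m \<noteq> g y\<close> by simp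
        next
          case 3 then show ?thesis using gm g'o m(2)[OF h] by simp
        qed
      qed
    qed
    then have "OrF HH g' I = m" using OrF_iff[OF g' I] m(1) by simp
    then show "OrF HH g' I = (if m = x \<and> y \<in> I then y else m)" using False by auto
  qed
qed

lemma swap_step:
  assumes g: "g permutes {1..n}" and xy: "x \<in> {1..n}" "y \<in> {1..n}" "x < y" "g y = Suc (g x)"
  shows "OrF HH (g \<circ> Transposition.transpose x y) = OrF HH g \<or>
         increasing_flip n HH (OrF HH g) (OrF HH (g \<circ> Transposition.transpose x y))"
proof (cases "OrF HH (g \<circ> Transposition.transpose x y) = OrF HH g")
  case False
  let ?g' = "g \<circ> Transposition.transpose x y"
  have sw: "\<And>I. I \<in> HH \<Longrightarrow> OrF HH ?g' I = (if OrF HH g I = x \<and> y \<in> I then y else OrF HH g I)"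
    using Or_swap[OF g xy(3,4) _ xy(1,2)] by blast
  have c1: "OrF HH g H \<noteq> OrF HH ?g' H \<longrightarrow> OrF HH g H = x \<and> OrF HH ?g' H = y" if H: "H \<in> HH" for H
    using sw[OF H] by auto
  have c2: "{x, y} \<subseteq> H \<longrightarrow> (OrF HH g H = x \<longleftrightarrow> OrF HH ?g' H = y)" if H: "H \<in> HH" for H
  proof
    assume sub: "{x, y} \<subseteq> H"
    show "OrF HH g H = x \<longleftrightarrow> OrF HH ?g' H = y"
    proof (cases "OrF HH g H = x")
      case True then show ?thesis using sw[OF H] sub by simp
    next
      case False
      have "OrF HH g H \<noteq> y"
      proof
        assume "OrF HH g H = y"
        then have "g y \<le> g x" using OrF_min[OF g H] sub by auto
        then show False using xy by simp
      qed
      then show ?thesis using sw[OF H] False by simp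
    qed
  qed
  have "increasing_flip n HH (OrF HH g) (OrF HH ?g')"
    unfolding increasing_flip_def
    apply (rule conjI)
    subgoal using False by metis
    apply (rule exI[of _ x], rule exI[of _ y])
    apply (intro conjI)
       apply (use xy in simp)
      apply (use xy in simp)
     apply (use xy in simp)
    using c1 c2 by blast
  then show ?thesis by simp
qed simp

lemma chainC:
  assumes q: "q permutes {1..n}"
  shows "g permutes {1..n} \<Longrightarrow> pos_inv g \<subseteq> pos_inv q \<Longrightarrow> card (pos_inv q - pos_inv g) = d
         \<Longrightarrow> P_le n HH (OrF HH g) (OrF HH q)"
proof (induction d arbitrary: g rule: less_induct)
  case (less d)
  note g = less.prems(1)
  have fin: "finite (pos_inv q)"
  proof (rule finite_subset)
    show "pos_inv q \<subseteq> {1..n} \<times> {1..n}" using pos_inv_sub[OF q] by auto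
  qed simp
  show ?case
  proof (cases "pos_inv g = pos_inv q")
    case True
    then have "g = q" using perm_eq_from_pos_inv[OF g q] by simp
    then show ?thesis unfolding P_le_def by simp
  next
    case False
    obtain x y where xy: "x \<in> {1..n}" "y \<in> {1..n}" "x < y" "g y = Suc (g x)"
      "(x, y) \<in> pos_inv q" "(x, y) \<notin> pos_inv g"
      using adjacent[OF g q less.prems(2) False] by blast
    define g' where "g' = g \<circ> Transposition.transpose x y"
    have g': "g' permutes {1..n}" unfolding g'_def
      by (rule permutes_compose[OF permutes_swap_id[OF xy(1,2)] g])
    have pg': "pos_inv g' = insert (x, y) (pos_inv g)"
      unfolding g'_def by (rule pos_inv_swap[OF g xy(3,4)])
    have sub': "pos_inv g' \<subseteq> pos_inv q" using pg' less.prems(2) xy(5) by simp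
    have deq: "pos_inv q - pos_inv g' = (pos_inv q - pos_inv g) - {(x, y)}"
      unfolding pg' by (rule Diff_insert)
    have D: "(x, y) \<in> pos_inv q - pos_inv g" using xy(5,6) by (rule DiffI)
    have fD: "finite (pos_inv q - pos_inv g)" using fin by (rule finite_Diff)
    have c1: "card (pos_inv q - pos_inv g') = card (pos_inv q - pos_inv g) - 1"
      unfolding deq by (rule card_Diff_singleton[OF D])
    have "card (pos_inv q - pos_inv g) > 0" using fD D card_gt_0_iff by blast
    then have "card (pos_inv q - pos_inv g') = d - 1" "d > 0"
      using c1 less.prems(3) by simp_all
    then have rest: "P_le n HH (OrF HH g') (OrF HH q)"
      using less.IH[of "d - 1" g'] g' sub' by simp
    have st: "OrF HH g' = OrF HH g \<or> increasing_flip n HH (OrF HH g) (OrF HH g')"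
      unfolding g'_def by (rule swap_step[OF g xy(1-4)])
    show ?thesis
    proof (cases "OrF HH g' = OrF HH g")
      case True then show ?thesis using rest by simp
    next
      case False
      then have "increasing_flip n HH (OrF HH g) (OrF HH g')" using st by simp
      then have "(OrF HH g, OrF HH g') \<in> {(Ori, Ori'). acyclic_orientation HH Ori \<and> acyclic_orientation HH Ori' \<and>
                        increasing_flip n HH Ori Ori'}"
        using OrF_acyclic[OF g] OrF_acyclic[OF g'] by simp
      then show ?thesis using rest unfolding P_le_def by (rule converse_rtrancl_into_rtrancl)
    qed
  qed
qed

end

lemma P_le_mono:
  assumes "P_le n HH A B" shows "\<forall>I\<in>HH. A I \<le> B I"
  using assms unfolding P_le_def
proof (induction rule: rtrancl_induct)
  case base then show ?case by simp
next
  case (step y z)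
  then have fl: "increasing_flip n HH y z" by simp
  have "y I \<le> z I" if "I \<in> HH" for I
  proof (cases "y I = z I")
    case False
    then show ?thesis using fl that unfolding increasing_flip_def by fastforce
  qed simp
  then show ?case using step.IH by (meson order_trans)
qed

context ihg
begin

lemma crossA:
  assumes ac: "acyclic_orientation HH Ori" and xy: "(x, y) \<in> (edges HH Ori)\<^sup>+"
    and ij: "i < j" "y \<le> i" and nm: "\<forall>m. i < m \<and> m < j \<longrightarrow> (m, y) \<notin> (edges HH Ori)\<^sup>+"
  shows "j \<le> x \<longrightarrow> (\<exists>H\<in>HH. i \<in> H \<and> j \<in> H \<and> (x, Ori H) \<in> (edges HH Ori)\<^sup>* \<and> j \<le> Ori H)"
  using xy
proof (induction rule: converse_trancl_induct)
  have or: "orientation HH Ori" using ac unfolding acyclic_orientation_def by simp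
  {
    case (base x)
    show ?case
    proof
      assume jx: "j \<le> x"
      obtain I where I: "I \<in> HH" "x = Ori I" "y \<in> I" using base by (auto elim: edgeE)
      have xI: "x \<in> I" using or I unfolding orientation_def by simp
      have "i \<in> I" "j \<in> I" using I_conv[OF I(1) I(3) xI] ij jx by auto
      then show "\<exists>H\<in>HH. i \<in> H \<and> j \<in> H \<and> (x, Ori H) \<in> (edges HH Ori)\<^sup>* \<and> j \<le> Ori H"
        using I jx by auto
    qed
  next
    case (step x z)
    show ?case
    proof
      assume jx: "j \<le> x"
      consider "j \<le> z" | "z \<le> i" | "i < z" "z < j" by linarith
      then show "\<exists>H\<in>HH. i \<in> H \<and> j \<in> H \<and> (x, Ori H) \<in> (edges HH Ori)\<^sup>* \<and> j \<le> Ori H"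
      proof cases
        case 1
        then obtain H where H: "H \<in> HH" "i \<in> H" "j \<in> H" "(z, Ori H) \<in> (edges HH Ori)\<^sup>*" "j \<le> Ori H"
          using step.IH by blast
        have "(x, Ori H) \<in> (edges HH Ori)\<^sup>*" using step.hyps(1) H(4) by (rule converse_rtrancl_into_rtrancl)
        then show ?thesis using H by blast
      next
        case 2
        obtain I where I: "I \<in> HH" "x = Ori I" "z \<in> I" using step.hyps(1) by (auto elim: edgeE)
        have xI: "x \<in> I" using or I unfolding orientation_def by simp
        have "i \<in> I" "j \<in> I" using I_conv[OF I(1) I(3) xI] ij jx 2 by auto
        then show ?thesis using I jx by auto
      next
        case 3
        then show ?thesis using nm step.hyps(2) by blast
      qed
    qed
  }
qed

lemma crossB:
  assumes ac: "acyclic_orientation HH Ori" and xy: "(x, y) \<in> (edges HH Ori)\<^sup>+"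
    and ij: "i < j" "j \<le> y" and nm: "\<forall>m. i < m \<and> m < j \<longrightarrow> (m, y) \<notin> (edges HH Ori)\<^sup>+"
  shows "x \<le> i \<longrightarrow> (\<exists>H\<in>HH. i \<in> H \<and> j \<in> H \<and> (x, Ori H) \<in> (edges HH Ori)\<^sup>* \<and> Ori H \<le> i)"
  using xy
proof (induction rule: converse_trancl_induct)
  have or: "orientation HH Ori" using ac unfolding acyclic_orientation_def by simp
  {
    case (base x)
    show ?case
    proof
      assume jx: "x \<le> i"
      obtain I where I: "I \<in> HH" "x = Ori I" "y \<in> I" using base by (auto elim: edgeE)
      have xI: "x \<in> I" using or I unfolding orientation_def by simp
      have "i \<in> I" "j \<in> I" using I_conv[OF I(1) xI I(3)] ij jx by auto
      then show "\<exists>H\<in>HH. i \<in> H \<and> j \<in> H \<and> (x, Ori H) \<in> (edges HH Ori)\<^sup>* \<and> Ori H \<le> i"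
        using I jx by auto
    qed
  next
    case (step x z)
    show ?case
    proof
      assume jx: "x \<le> i"
      consider "z \<le> i" | "j \<le> z" | "i < z" "z < j" by linarith
      then show "\<exists>H\<in>HH. i \<in> H \<and> j \<in> H \<and> (x, Ori H) \<in> (edges HH Ori)\<^sup>* \<and> Ori H \<le> i"
      proof cases
        case 1
        then obtain H where H: "H \<in> HH" "i \<in> H" "j \<in> H" "(z, Ori H) \<in> (edges HH Ori)\<^sup>*" "Ori H \<le> i"
          using step.IH by blast
        have "(x, Ori H) \<in> (edges HH Ori)\<^sup>*" using step.hyps(1) H(4) by (rule converse_rtrancl_into_rtrancl)
        then show ?thesis using H by blast
      next
        case 2
        obtain I where I: "I \<in> HH" "x = Ori I" "z \<in> I" using step.hyps(1) by (auto elim: edgeE)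
        have xI: "x \<in> I" using or I unfolding orientation_def by simp
        have "i \<in> I" "j \<in> I" using I_conv[OF I(1) xI I(3)] ij jx 2 by auto
        then show ?thesis using I jx by auto
      next
        case 3
        then show ?thesis using nm step.hyps(2) by blast
      qed
    qed
  }
qed

lemma combine:
  assumes acA: "acyclic_orientation HH A" and acB: "acyclic_orientation HH B"
    and H: "H \<in> HH" "i \<in> H" "j \<in> H" "(j, A H) \<in> (edges HH A)\<^sup>*" "j \<le> A H"
    and K: "K \<in> HH" "i \<in> K" "j \<in> K" "(i, B K) \<in> (edges HH B)\<^sup>*" "B K \<le> i"
    and ij: "i < j"
  shows "\<exists>L\<in>HH. B L < A L"
proof -
  define L where "L = H \<inter> K"
  have L: "L \<in> HH" unfolding L_def using I_int[OF H(1) K(1) H(2) K(2)] .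
  have jL: "j \<in> L" "i \<in> L" unfolding L_def using H K by auto
  have ALin: "A L \<in> L" using acA L unfolding acyclic_orientation_def orientation_def by simp
  have BLin: "B L \<in> L" using acB L unfolding acyclic_orientation_def orientation_def by simp
  have c1: "j \<le> A L"
  proof (cases "A L = A H")
    case False
    show ?thesis
    proof (rule ccontr)
      assume nj: "\<not> j \<le> A L"
      then have "A L \<noteq> j" by simp
      then have e1: "(A L, j) \<in> edges HH A" using edgeI[OF L jL(1)] by simp
      have e2: "(A H, A L) \<in> edges HH A" using edgeI[OF H(1), of "A L" A] ALin False unfolding L_def by auto
      have "(A L, A H) \<in> (edges HH A)\<^sup>*" using e1 H(4) by (rule converse_rtrancl_into_rtrancl)
      then have "(A L, A L) \<in> (edges HH A)\<^sup>+" using e2 by (rule rtrancl_into_trancl1)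
      then show False using irrefl_prec[OF acA] by simp
    qed
  qed (use H(5) in simp)
  have c2: "B L \<le> i"
  proof (cases "B L = B K")
    case False
    show ?thesis
    proof (rule ccontr)
      assume nj: "\<not> B L \<le> i"
      then have "B L \<noteq> i" by simp
      then have e1: "(B L, i) \<in> edges HH B" using edgeI[OF L jL(2)] by simp
      have e2: "(B K, B L) \<in> edges HH B" using edgeI[OF K(1), of "B L" B] BLin False unfolding L_def by auto
      have "(B L, B K) \<in> (edges HH B)\<^sup>*" using e1 K(4) by (rule converse_rtrancl_into_rtrancl)
      then have "(B L, B L) \<in> (edges HH B)\<^sup>+" using e2 by (rule rtrancl_into_trancl1)
      then show False using irrefl_prec[OF acB] by simp
    qed
  qed (use K(5) in simp)
  show ?thesis using L c1 c2 ij by force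
qed

lemma main_bd:
  assumes acA: "acyclic_orientation HH A" and acB: "acyclic_orientation HH B"
  shows "\<forall>i j. j - i = d \<longrightarrow> i < j \<longrightarrow> (j, i) \<in> (edges HH A)\<^sup>+ \<longrightarrow> (i, j) \<in> (edges HH B)\<^sup>+
           \<longrightarrow> (\<exists>L\<in>HH. B L < A L)"
proof (induction d rule: less_induct)
  case (less d)
  have orA: "orientation HH A" using acA unfolding acyclic_orientation_def by simp
  have orB: "orientation HH B" using acB unfolding acyclic_orientation_def by simp
  show ?case
  proof (intro allI impI)
    fix i j assume d: "j - i = d" and ij: "i < j" and a: "(j, i) \<in> (edges HH A)\<^sup>+" and b: "(i, j) \<in> (edges HH B)\<^sup>+"
    show "\<exists>L\<in>HH. B L < A L"
    proof (cases "\<exists>m. i < m \<and> m < j \<and> (m, i) \<in> (edges HH A)\<^sup>+")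
      case True
      then obtain m where m: "i < m" "m < j" "(m, i) \<in> (edges HH A)\<^sup>+" by blast
      have "(i, m) \<in> (edges HH B)\<^sup>+" using betw[OF orB b] m by simp
      moreover have "m - i < d" using m d by simp
      ultimately show ?thesis using less.IH m by blast
    next
      case nA: False
      show ?thesis
      proof (cases "\<exists>m. i < m \<and> m < j \<and> (m, j) \<in> (edges HH B)\<^sup>+")
        case True
        then obtain m where m: "i < m" "m < j" "(m, j) \<in> (edges HH B)\<^sup>+" by blast
        have "(j, m) \<in> (edges HH A)\<^sup>+" using betw[OF orA a] m by simp
        moreover have "j - m < d" using m d by simp
        ultimately show ?thesis using less.IH m by blast
      next
        case nB: False
        obtain H where H: "H \<in> HH" "i \<in> H" "j \<in> H" "(j, A H) \<in> (edges HH A)\<^sup>*" "j \<le> A H"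
          using crossA[OF acA a ij order_refl] nA by blast
        obtain K where K: "K \<in> HH" "i \<in> K" "j \<in> K" "(i, B K) \<in> (edges HH B)\<^sup>*" "B K \<le> i"
          using crossB[OF acB b ij order_refl] nB by blast
        show ?thesis by (rule combine[OF acA acB H K ij])
      qed
    qed
  qed
qed

end

theorem theorem4p9:
  fixes n :: nat and \<I> :: "nat set set" and A B :: "nat set \<Rightarrow> nat"
  assumes "interval_hypergraph n \<I>"
    and "closed_under_intersection \<I>"
    and "acyclic_orientation \<I> A"
    and "acyclic_orientation \<I> B"
  shows "(P_le n \<I> A B \<longleftrightarrow> (\<forall>I\<in>\<I>. A I \<le> B I))
       \<and> ((\<forall>I\<in>\<I>. A I \<le> B I) \<longleftrightarrow> weak_le n (sigma_of n \<I> A) (tau_of n \<I> B))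
       \<and> (weak_le n (sigma_of n \<I> A) (tau_of n \<I> B) \<longleftrightarrow>
            (\<forall>i j. 1 \<le> i \<and> i < j \<and> j \<le> n \<longrightarrow> (j, i) \<in> prec \<I> A \<longrightarrow> (i, j) \<notin> prec \<I> B))"
proof -
  interpret ihg n \<I> by (rule ihg.intro[OF assms(1,2)])
  have orA: "orientation \<I> A" using assms(3) unfolding acyclic_orientation_def by simp
  have orB: "orientation \<I> B" using assms(4) unfolding acyclic_orientation_def by simp
  obtain gA where gA: "gA permutes {1..n}" "sigma_of n \<I> A = inv gA" "inv gA \<in> fiber n \<I> A"
    and dA: "\<And>a b. (a, b) \<in> pos_inv gA \<Longrightarrow> a \<in> {1..n} \<and> b \<in> {1..n} \<and> a < b \<and> (b, a) \<in> prec \<I> A"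
    using sigma_facts[OF assms(3)] by blast
  obtain gB where gB: "gB permutes {1..n}" "tau_of n \<I> B = inv gB" "inv gB \<in> fiber n \<I> B"
    and dB: "\<And>a b. a \<in> {1..n} \<Longrightarrow> b \<in> {1..n} \<Longrightarrow> a < b \<Longrightarrow> (a, b) \<notin> prec \<I> B \<Longrightarrow> (a, b) \<in> pos_inv gB"
    using tau_facts[OF assms(4)] by blast
  let ?a = "P_le n \<I> A B"
  let ?b = "\<forall>I\<in>\<I>. A I \<le> B I"
  let ?c = "weak_le n (sigma_of n \<I> A) (tau_of n \<I> B)"
  let ?d = "\<forall>i j. 1 \<le> i \<and> i < j \<and> j \<le> n \<longrightarrow> (j, i) \<in> prec \<I> A \<longrightarrow> (i, j) \<notin> prec \<I> B"
  have ab: "?a \<Longrightarrow> ?b" by (rule P_le_mono)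
  have bd: "?b \<Longrightarrow> ?d"
  proof -
    assume b: ?b
    show ?d
    proof (intro allI impI notI)
      fix i j assume ij: "1 \<le> i \<and> i < j \<and> j \<le> n" and ja: "(j, i) \<in> prec \<I> A" and ib: "(i, j) \<in> prec \<I> B"
      obtain L where "L \<in> \<I>" "B L < A L"
        using main_bd[OF assms(3,4), of "j - i"] ij ja ib unfolding prec_eq by blast
      then show False using b by force
    qed
  qed
  have dc: "?d \<Longrightarrow> ?c"
  proof -
    assume d: ?d
    have "pos_inv gA \<subseteq> pos_inv gB"
    proof
      fix p assume "p \<in> pos_inv gA"
      then obtain a b where p: "p = (a, b)" "(a, b) \<in> pos_inv gA" by (cases p) auto
      have h: "a \<in> {1..n}" "b \<in> {1..n}" "a < b" "(b, a) \<in> prec \<I> A" using dA[OF p(2)] by auto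
      then have "(a, b) \<notin> prec \<I> B" using d by auto
      then show "p \<in> pos_inv gB" using dB[OF h(1-3)] p(1) by simp
    qed
    then show ?c unfolding weak_le_def gA(2) gB(2)
      using permutes_inv[OF gA(1)] permutes_inv[OF gB(1)] inversions_inv[OF gA(1)] inversions_inv[OF gB(1)]
      by simp
  qed
  have ca: "?c \<Longrightarrow> ?a"
  proof -
    assume c: ?c
    have sub: "pos_inv gA \<subseteq> pos_inv gB"
      using c unfolding weak_le_def gA(2) gB(2) inversions_inv[OF gA(1)] inversions_inv[OF gB(1)] by simp
    have "P_le n \<I> (OrF \<I> gA) (OrF \<I> gB)"
      by (rule chainC[OF gB(1) gA(1) sub refl])
    moreover have "OrF \<I> gA = A" using OrF_fiber[OF orA gA(3)] permutes_inv_inv[OF gA(1)] by simp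
    moreover have "OrF \<I> gB = B" using OrF_fiber[OF orB gB(3)] permutes_inv_inv[OF gB(1)] by simp
    ultimately show ?a by simp
  qed
  show ?thesis using ab bd dc ca by blast
qed

end
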